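(* Let $S^+=\{\overline{\jmath}_1,\dots,\overline{\jmath}_\nu\}$ be a set of distinct positive integers, $S=S^+\cup(-S^+)$, $S^c=\mathbb{Z}\setminus(S\cup\{0\})$, $\lambda(j)=j\frac{4+j^2}{1+j^2}$ and $\overline\omega=(\lambda(\overline{\jmath}_1),\dots,\lambda(\overline{\jmath}_\nu))$. There exists a constant $C>0$ depending on the set $S$ such that the following holds: if $j,j'\in S^c$, $j\ne j'$, $\ell\in\mathbb{Z}^\nu$ with $0<|\ell|\le2$ (where $|\ell|=\sum_i|\ell_i|$), $\sum_{i=1}^\nu\overline{\jmath}_i\ell_i+j-j'=0$ and $\delta_{\ell jj'}:=\overline\omega\cdot\ell+\lambda(j)-\lambda(j')\ne0$, then $|\delta_{\ell jj'}|\ge C$. *)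

theory Defs
  imports Complex_Main
begin

definition lam :: "int \<Rightarrow> real" where
  "lam j = real_of_int j * (4 + (real_of_int j)^2) / (1 + (real_of_int j)^2)"

definition tangS :: "nat \<Rightarrow> (nat \<Rightarrow> int) \<Rightarrow> int set" where
  "tangS \<nu> jbar = jbar ` {..<\<nu>} \<union> uminus ` jbar ` {..<\<nu>}"

definition normS :: "nat \<Rightarrow> (nat \<Rightarrow> int) \<Rightarrow> int set" where
  "normS \<nu> jbar = UNIV - (tangS \<nu> jbar \<union> {0})"

definition delta :: "nat \<Rightarrow> (nat \<Rightarrow> int) \<Rightarrow> (nat \<Rightarrow> int) \<Rightarrow> int \<Rightarrow> int \<Rightarrow> real" where
  "delta \<nu> jbar l j j' = (\<Sum>i<\<nu>. lam (jbar i) * real_of_int (l i)) + lam j - lam j'"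

end

theory Submission
  imports Defs "HOL-Library.FuncSet"
begin

definition rr :: "int \<Rightarrow> real" where
  "rr x = 3 * real_of_int x / (1 + (real_of_int x)^2)"

lemma lam_rr: "lam x = real_of_int x + rr x"
proof -
  have "1 + (real_of_int x)^2 > 0" by (simp add: add_pos_nonneg)
  then show ?thesis unfolding lam_def rr_def by (simp add: field_simps power2_eq_square)
qed

lemma rr_pos: "x > 0 \<Longrightarrow> rr x > 0"
  unfolding rr_def by (simp add: add_pos_nonneg)

lemma rr_inj: assumes "x > 0" "y > 0" "rr x = rr y" shows "x = y"
proof -
  have d1: "1 + (real_of_int x)^2 > 0" "1 + (real_of_int y)^2 > 0" by (simp_all add: add_pos_nonneg)
  have "3 * real_of_int x * (1 + (real_of_int y)^2) = 3 * real_of_int y * (1 + (real_of_int x)^2)"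
    using assms(3) d1 unfolding rr_def by (simp add: field_simps)
  then have "(real_of_int x - real_of_int y) * (1 - real_of_int x * real_of_int y) = 0"
    by (simp add: algebra_simps power2_eq_square)
  then have "x = y \<or> x * y = 1"
    by (metis eq_iff_diff_eq_0 mult_eq_0_iff of_int_eq_iff of_int_mult of_int_1)
  then show ?thesis using assms(1,2)
    by (metis pos_zmult_eq_1_iff)
qed

lemma rr_bound: assumes "x \<noteq> 0" shows "\<bar>rr x\<bar> \<le> 3 / \<bar>real_of_int x\<bar>"
proof -
  have p: "\<bar>real_of_int x\<bar> > 0" using assms by simp
  have d: "1 + (real_of_int x)^2 > 0" by (simp add: add_pos_nonneg)
  have "\<bar>rr x\<bar> = 3 * \<bar>real_of_int x\<bar> / (1 + \<bar>real_of_int x\<bar>^2)"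
    unfolding rr_def using d by (simp add: abs_mult)
  also have "\<dots> \<le> 3 / \<bar>real_of_int x\<bar>"
    using p d by (simp add: divide_simps abs_mult_self_eq power2_eq_square)
  finally show ?thesis .
qed

lemma A_nonzero:
  fixes \<nu> :: nat and jbar :: "nat \<Rightarrow> int" and l :: "nat \<Rightarrow> int"
  assumes inj: "inj_on jbar {..<\<nu>}"
    and pos: "\<And>i. i < \<nu> \<Longrightarrow> jbar i > 0"
    and s0: "0 < (\<Sum>i<\<nu>. \<bar>l i\<bar>)" and s2: "(\<Sum>i<\<nu>. \<bar>l i\<bar>) \<le> 2"
  shows "(\<Sum>i<\<nu>. rr (jbar i) * real_of_int (l i)) \<noteq> 0"
proof -
  obtain i0 where i0: "i0 < \<nu>" "l i0 \<noteq> 0"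
    using s0 by (metis (no_types, lifting) abs_zero lessThan_iff less_irrefl sum.neutral)
  define S where "S = {..<\<nu>} - {i0}"
  have fS: "finite S" unfolding S_def by simp
  have e1: "(\<Sum>i<\<nu>. \<bar>l i\<bar>) = \<bar>l i0\<bar> + (\<Sum>i\<in>S. \<bar>l i\<bar>)"
    unfolding S_def using i0 by (simp add: sum.remove)
  have e2: "(\<Sum>i<\<nu>. rr (jbar i) * real_of_int (l i)) = rr (jbar i0) * l i0 + (\<Sum>i\<in>S. rr (jbar i) * real_of_int (l i))"
    unfolding S_def using i0 by (simp add: sum.remove)
  have nn: "(\<Sum>i\<in>S. \<bar>l i\<bar>) \<ge> 0" by (simp add: sum_nonneg)
  show ?thesis
  proof (cases "(\<Sum>i\<in>S. \<bar>l i\<bar>) = 0")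
    case True
    then have "\<forall>i\<in>S. l i = 0" using fS by (simp add: sum_nonneg_eq_0_iff)
    then have "(\<Sum>i\<in>S. rr (jbar i) * real_of_int (l i)) = 0" by simp
    moreover have "rr (jbar i0) > 0" using rr_pos pos i0 by simp
    ultimately show ?thesis using e2 i0 by simp
  next
    case False
    have a0: "\<bar>l i0\<bar> \<ge> 1" using i0 by simp
    have g1: "(\<Sum>i\<in>S. \<bar>l i\<bar>) \<ge> 1" using nn False by linarith
    have l0: "\<bar>l i0\<bar> = 1" and sS: "(\<Sum>i\<in>S. \<bar>l i\<bar>) = 1" using e1 s2 a0 g1 by linarith+
    obtain i1 where i1: "i1 \<in> S" "l i1 \<noteq> 0"
      using False by (metis (no_types, lifting) abs_zero sum.neutral)
    define S' where "S' = S - {i1}"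
    have e3: "(\<Sum>i\<in>S. \<bar>l i\<bar>) = \<bar>l i1\<bar> + (\<Sum>i\<in>S'. \<bar>l i\<bar>)"
      unfolding S'_def using i1 fS by (simp add: sum.remove)
    have e4: "(\<Sum>i\<in>S. rr (jbar i) * real_of_int (l i)) = rr (jbar i1) * l i1 + (\<Sum>i\<in>S'. rr (jbar i) * real_of_int (l i))"
      unfolding S'_def using i1 fS by (simp add: sum.remove)
    have nn': "(\<Sum>i\<in>S'. \<bar>l i\<bar>) \<ge> 0" by (simp add: sum_nonneg)
    have a1: "\<bar>l i1\<bar> \<ge> 1" using i1 by simp
    have l1: "\<bar>l i1\<bar> = 1" and sS': "(\<Sum>i\<in>S'. \<bar>l i\<bar>) = 0" using e3 sS a1 nn' by linarith+
    then have "\<forall>i\<in>S'. l i = 0" using fS unfolding S'_def by (simp add: sum_nonneg_eq_0_iff)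
    then have z: "(\<Sum>i\<in>S'. rr (jbar i) * real_of_int (l i)) = 0" by simp
    have i1n: "i1 < \<nu>" "i1 \<noteq> i0" using i1 unfolding S_def by auto
    have r0: "rr (jbar i0) > 0" using rr_pos pos i0 by simp
    have r1: "rr (jbar i1) > 0" using rr_pos pos i1n by simp
    have ne: "rr (jbar i0) \<noteq> rr (jbar i1)"
    proof
      assume "rr (jbar i0) = rr (jbar i1)"
      then have "jbar i0 = jbar i1" using rr_inj pos i0 i1n by blast
      then show False using inj i0 i1n by (auto dest: inj_onD)
    qed
    have "l i0 = 1 \<or> l i0 = -1" "l i1 = 1 \<or> l i1 = -1" using l0 l1 by auto
    then have "rr (jbar i0) * l i0 + rr (jbar i1) * l i1 \<noteq> 0" using r0 r1 ne by auto
    then show ?thesis using e2 e4 z by simp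
  qed
qed

theorem lemmaC7:
  fixes \<nu> :: nat and jbar :: "nat \<Rightarrow> int"
  assumes "inj_on jbar {..<\<nu>}"
    and "\<And>i. i < \<nu> \<Longrightarrow> jbar i > 0"
  shows "\<exists>C>0. \<forall>j j' (l :: nat \<Rightarrow> int).
           j \<in> normS \<nu> jbar \<longrightarrow> j' \<in> normS \<nu> jbar \<longrightarrow> j \<noteq> j' \<longrightarrow>
           0 < (\<Sum>i<\<nu>. \<bar>l i\<bar>) \<longrightarrow> (\<Sum>i<\<nu>. \<bar>l i\<bar>) \<le> 2 \<longrightarrow>
           (\<Sum>i<\<nu>. jbar i * l i) + j - j' = 0 \<longrightarrow>
           delta \<nu> jbar l j j' \<noteq> 0 \<longrightarrow>
           \<bar>delta \<nu> jbar l j j'\<bar> \<ge> C"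
proof -
  define L where "L = PiE {..<\<nu>} (\<lambda>_. {-2..2::int})"
  have fL: "finite L" unfolding L_def by (simp add: finite_PiE)
  define adm where "adm l \<longleftrightarrow> 0 < (\<Sum>i<\<nu>. \<bar>l i\<bar>) \<and> (\<Sum>i<\<nu>. \<bar>l i\<bar>) \<le> 2" for l :: "nat \<Rightarrow> int"
  define Aval where "Aval l = (\<Sum>i<\<nu>. rr (jbar i) * real_of_int (l i))" for l :: "nat \<Rightarrow> int"
  define Aset where "Aset = Aval ` {l \<in> L. adm l}"
  have fA: "finite Aset" unfolding Aset_def using fL by simp
  define \<alpha> where "\<alpha> = Min (insert 1 (abs ` Aset))"
  have Apos: "\<forall>x \<in> Aset. \<bar>x\<bar> > 0"
  proof
    fix x assume "x \<in> Aset"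
    then obtain l where l: "adm l" "x = Aval l" unfolding Aset_def by auto
    then show "\<bar>x\<bar> > 0" using A_nonzero[OF assms] unfolding adm_def Aval_def by simp
  qed
  have \<alpha>pos: "\<alpha> > 0" unfolding \<alpha>_def using fA Apos by (subst Min_gr_iff) auto
  have restr: "restrict l {..<\<nu>} \<in> L" if "adm l" for l
  proof -
    have "\<bar>l i\<bar> \<le> 2" if "i < \<nu>" for i
    proof -
      have "\<bar>l i\<bar> \<le> (\<Sum>i<\<nu>. \<bar>l i\<bar>)" using that by (intro member_le_sum) auto
      then show ?thesis using \<open>adm l\<close> unfolding adm_def by simp
    qed
    then show ?thesis unfolding L_def by (force simp: PiE_def Pi_def abs_le_iff)
  qed
  have sum_restr: "(\<Sum>i<\<nu>. f (restrict l {..<\<nu>} i)) = (\<Sum>i<\<nu>. f (l i))" for f :: "int \<Rightarrow> 'b::comm_monoid_add" and l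
    by (rule sum.cong) auto
  have sum_restr2: "(\<Sum>i<\<nu>. g i (restrict l {..<\<nu>} i)) = (\<Sum>i<\<nu>. g i (l i))" for g :: "nat \<Rightarrow> int \<Rightarrow> 'b::comm_monoid_add" and l
    by (rule sum.cong) auto
  have Abound: "\<bar>Aval l\<bar> \<ge> \<alpha>" if "adm l" for l
  proof -
    have ad: "adm (restrict l {..<\<nu>})" using that unfolding adm_def by (simp add: sum_restr)
    have "Aval l = Aval (restrict l {..<\<nu>})" unfolding Aval_def by (simp add: sum_restr2)
    then have "Aval l \<in> Aset" unfolding Aset_def using restr[OF that] ad by auto
    then show ?thesis unfolding \<alpha>_def using fA by (intro Min_le) auto
  qed
  define M where "M = (\<Sum>i<\<nu>. jbar i)"
  have Mbound: "\<bar>\<Sum>i<\<nu>. jbar i * l i\<bar> \<le> 2 * M" if "adm l" for l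
  proof -
    have "\<bar>\<Sum>i<\<nu>. jbar i * l i\<bar> \<le> (\<Sum>i<\<nu>. \<bar>jbar i * l i\<bar>)" by (rule sum_abs)
    also have "\<dots> \<le> (\<Sum>i<\<nu>. jbar i * 2)"
    proof (rule sum_mono)
      fix i assume i: "i \<in> {..<\<nu>}"
      have "\<bar>l i\<bar> \<le> (\<Sum>i<\<nu>. \<bar>l i\<bar>)" using i by (intro member_le_sum) auto
      then have "\<bar>l i\<bar> \<le> 2" using that unfolding adm_def by simp
      moreover have "jbar i > 0" using assms(2) i by simp
      ultimately show "\<bar>jbar i * l i\<bar> \<le> jbar i * 2" by (simp add: abs_mult)
    qed
    finally show ?thesis unfolding M_def by (simp add: sum_distrib_right[symmetric] mult.commute)
  qed
  define B where "B = \<lceil>12 / \<alpha>\<rceil> + 2 * M"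
  define J where "J = {-B-2*M..B+2*M}"
  define V where "V = (\<lambda>(l,j,j'). delta \<nu> jbar l j j') ` (L \<times> J \<times> J)"
  have fV: "finite V" unfolding V_def J_def using fL by simp
  define C where "C = Min (insert (\<alpha>/2) (abs ` (V - {0})))"
  have Cpos: "C > 0" unfolding C_def using fV \<alpha>pos by (subst Min_gr_iff) auto
  have Cle: "C \<le> \<alpha>/2" unfolding C_def using fV by (intro Min_le) auto
  have delta_eq: "delta \<nu> jbar l j j' = Aval l + rr j - rr j'"
    if "(\<Sum>i<\<nu>. jbar i * l i) + j - j' = 0" for l j j'
  proof -
    have "real_of_int ((\<Sum>i<\<nu>. jbar i * l i) + j - j') = 0" using that by simp
    then have h: "(\<Sum>i<\<nu>. real_of_int (jbar i) * real_of_int (l i)) + real_of_int j - real_of_int j' = 0"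
      by simp
    have "delta \<nu> jbar l j j' = (\<Sum>i<\<nu>. real_of_int (jbar i) * real_of_int (l i) + rr (jbar i) * real_of_int (l i)) + real_of_int j + rr j - real_of_int j' - rr j'"
      unfolding delta_def lam_rr by (simp add: algebra_simps)
    also have "\<dots> = Aval l + rr j - rr j'" unfolding Aval_def sum.distrib using h by simp
    finally show ?thesis .
  qed
  have "\<forall>j j' (l :: nat \<Rightarrow> int).
           j \<in> normS \<nu> jbar \<longrightarrow> j' \<in> normS \<nu> jbar \<longrightarrow> j \<noteq> j' \<longrightarrow>
           0 < (\<Sum>i<\<nu>. \<bar>l i\<bar>) \<longrightarrow> (\<Sum>i<\<nu>. \<bar>l i\<bar>) \<le> 2 \<longrightarrow>
           (\<Sum>i<\<nu>. jbar i * l i) + j - j' = 0 \<longrightarrow>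
           delta \<nu> jbar l j j' \<noteq> 0 \<longrightarrow>
           \<bar>delta \<nu> jbar l j j'\<bar> \<ge> C"
  proof (intro allI impI)
    fix j j' and l :: "nat \<Rightarrow> int"
    assume h1: "0 < (\<Sum>i<\<nu>. \<bar>l i\<bar>)" and h2: "(\<Sum>i<\<nu>. \<bar>l i\<bar>) \<le> 2"
      and h3: "(\<Sum>i<\<nu>. jbar i * l i) + j - j' = 0" and h4: "delta \<nu> jbar l j j' \<noteq> 0"
    have ad: "adm l" using h1 h2 unfolding adm_def by simp
    have dj: "\<bar>j - j'\<bar> \<le> 2 * M" using Mbound[OF ad] h3 by linarith
    show "\<bar>delta \<nu> jbar l j j'\<bar> \<ge> C"
    proof (cases "\<bar>j\<bar> \<le> B")
      case True
      have "j \<in> J" "j' \<in> J" unfolding J_def using True dj by auto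
      moreover have "delta \<nu> jbar l j j' = delta \<nu> jbar (restrict l {..<\<nu>}) j j'"
        unfolding delta_def by (simp add: sum_restr2)
      ultimately have "delta \<nu> jbar l j j' \<in> V" unfolding V_def using restr[OF ad] by force
      then show ?thesis unfolding C_def using fV h4 by (intro Min_le) auto
    next
      case False
      have c: "real_of_int \<lceil>12 / \<alpha>\<rceil> \<ge> 12 / \<alpha>" by simp
      have jb: "real_of_int \<bar>j\<bar> \<ge> 12 / \<alpha>" using False c unfolding B_def
        using dj by (smt (verit) of_int_le_iff of_int_add of_int_mult abs_ge_zero)
      have jb': "real_of_int \<bar>j'\<bar> \<ge> 12 / \<alpha>" using False c dj unfolding B_def
        by (smt (verit) of_int_le_iff of_int_add of_int_mult)
      have pos12: "12 / \<alpha> > 0" using \<alpha>pos by simp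
      have small: "\<bar>rr x\<bar> \<le> \<alpha> / 4" if "real_of_int \<bar>x\<bar> \<ge> 12 / \<alpha>" for x
      proof -
        have xn: "x \<noteq> 0" using that pos12 by auto
        have xp: "\<bar>real_of_int x\<bar> > 0" using that pos12 by linarith
        have "\<bar>rr x\<bar> \<le> 3 / \<bar>real_of_int x\<bar>" by (rule rr_bound[OF xn])
        also have "\<dots> \<le> 3 / (12 / \<alpha>)" using that pos12 xp by (intro divide_left_mono) (simp_all add: mult_pos_pos)
        also have "\<dots> = \<alpha> / 4" using \<alpha>pos by simp
        finally show ?thesis .
      qed
      have "\<bar>Aval l\<bar> \<ge> \<alpha>" by (rule Abound[OF ad])
      then have "\<bar>delta \<nu> jbar l j j'\<bar> \<ge> \<alpha> / 2" using delta_eq[OF h3] small[OF jb] small[OF jb'] by linarith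
      then show ?thesis using Cle by linarith
    qed
  qed
  then show ?thesis using Cpos by blast
qed

end
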